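(* Let $D$ be a distributive lattice with bottom and let $e,f,i,j\in D$ with $f<e$ and $j<i$. Then $\mathcal{V}_{e;f}\subseteq\mathcal{V}_{i;j}$ if and only if $e=f\vee(e\wedge i)$ and $f\wedge j=e\wedge j$.
   Context: A prime filter of $D$ is a nonempty, upward closed subset $F$ not containing the bottom, closed under binary meets, such that $x\vee y\in F$ implies $x\in F$ or $y\in F$. For $e\in D$, $\mathcal{V}_e$ is the set of prime filters of $D$ containing $e$, and for $f\le e$, $\mathcal{V}_{e;f}=\mathcal{V}_e\setminus\mathcal{V}_f$. *)

theory Defs
  imports Main
begin

definition prime_filter :: "'a::{distrib_lattice, order_bot} set \<Rightarrow> bool" where
  "prime_filter F \<longleftrightarrow>
     F \<noteq> {} \<and>
     (\<forall>x y. x \<in> F \<longrightarrow> x \<le> y \<longrightarrow> y \<in> F) \<and>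
     bot \<notin> F \<and>
     (\<forall>x y. x \<in> F \<longrightarrow> y \<in> F \<longrightarrow> inf x y \<in> F) \<and>
     (\<forall>x y. sup x y \<in> F \<longrightarrow> x \<in> F \<or> y \<in> F)"

definition V :: "'a::{distrib_lattice, order_bot} \<Rightarrow> 'a set set" where
  "V e = {F. prime_filter F \<and> e \<in> F}"

definition V2 :: "'a::{distrib_lattice, order_bot} \<Rightarrow> 'a \<Rightarrow> 'a set set" where
  "V2 e f = V e - V f"

end

theory Submission
  imports Defs
begin

definition filtab :: "'a::{distrib_lattice, order_bot} \<Rightarrow> 'a \<Rightarrow> 'a set \<Rightarrow> bool" where
  "filtab a b S \<longleftrightarrow> (\<forall>x y. x \<in> S \<longrightarrow> x \<le> y \<longrightarrow> y \<in> S) \<and>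
     (\<forall>x y. x \<in> S \<longrightarrow> y \<in> S \<longrightarrow> inf x y \<in> S) \<and> a \<in> S \<and> b \<notin> S"

lemma pft:
  fixes a b :: "'a::{distrib_lattice, order_bot}"
  assumes "\<not> a \<le> b"
  shows "\<exists>F. prime_filter F \<and> a \<in> F \<and> b \<notin> F"
proof -
  let ?A = "{S. filtab a b S}"
  have up: "filtab a b {x. a \<le> x}" using assms unfolding filtab_def
    by (auto intro: order_trans)
  have "\<forall>C\<in>chains ?A. \<exists>U\<in>?A. \<forall>X\<in>C. X \<subseteq> U"
  proof
    fix C assume C: "C \<in> chains ?A"
    hence sub: "C \<subseteq> ?A" and ch: "\<forall>X\<in>C. \<forall>Y\<in>C. X \<subseteq> Y \<or> Y \<subseteq> X"
      by (auto simp: chains_alt_def subset_chain_def)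
    show "\<exists>U\<in>?A. \<forall>X\<in>C. X \<subseteq> U"
    proof (cases "C = {}")
      case True thus ?thesis using up by auto
    next
      case False
      have "filtab a b (\<Union>C)" unfolding filtab_def
      proof (intro conjI allI impI)
        fix x y assume "x \<in> \<Union>C" "x \<le> y" thus "y \<in> \<Union>C"
          using sub unfolding filtab_def by blast
      next
        fix x y assume "x \<in> \<Union>C" "y \<in> \<Union>C"
        then obtain X Y where XY: "X \<in> C" "Y \<in> C" "x \<in> X" "y \<in> Y" by blast
        show "inf x y \<in> \<Union>C"
        proof (cases "X \<subseteq> Y")
          case True thus ?thesis using XY sub unfolding filtab_def by blast
        next
          case False hence "Y \<subseteq> X" using ch XY by blast
          thus ?thesis using XY sub unfolding filtab_def by blast
        qed
      next
        show "a \<in> \<Union>C" using False sub unfolding filtab_def by blast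
      next
        show "b \<notin> \<Union>C" using sub unfolding filtab_def by blast
      qed
      thus ?thesis by blast
    qed
  qed
  from Zorn_Lemma2[OF this] obtain M where M: "filtab a b M"
    and max: "\<And>X. filtab a b X \<Longrightarrow> M \<subseteq> X \<Longrightarrow> X = M" by auto
  have upM: "\<And>x y. x \<in> M \<Longrightarrow> x \<le> y \<Longrightarrow> y \<in> M"
    and infM: "\<And>x y. x \<in> M \<Longrightarrow> y \<in> M \<Longrightarrow> inf x y \<in> M"
    and aM: "a \<in> M" and bM: "b \<notin> M" using M unfolding filtab_def by auto
  have gen: "\<exists>m\<in>M. inf m x \<le> b" if "x \<notin> M" for x
  proof (rule ccontr)
    assume nb: "\<not> (\<exists>m\<in>M. inf m x \<le> b)"
    let ?G = "{z. \<exists>m\<in>M. inf m x \<le> z}"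
    have "filtab a b ?G" unfolding filtab_def
    proof (intro conjI allI impI)
      fix u v assume "u \<in> ?G" "u \<le> v" thus "v \<in> ?G" by (auto intro: order_trans)
    next
      fix u v assume "u \<in> ?G" "v \<in> ?G"
      then obtain m n where mn: "m \<in> M" "n \<in> M" "inf m x \<le> u" "inf n x \<le> v" by auto
      have "inf (inf m n) x \<le> inf u v" using mn(3,4)
        by (meson inf_le1 inf_le2 le_inf_iff order_trans)
      thus "inf u v \<in> ?G" using infM[OF mn(1,2)] by blast
    next
      show "a \<in> ?G" using aM by (auto intro!: bexI[of _ a])
    next
      show "b \<notin> ?G" using nb by auto
    qed
    moreover have "M \<subseteq> ?G" by (auto intro!: inf_le1)
    ultimately have "?G = M" using max by blast
    moreover have "x \<in> ?G" using aM by (auto intro!: bexI[of _ a])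
    ultimately show False using that by auto
  qed
  have "prime_filter M" unfolding prime_filter_def
  proof (intro conjI allI impI)
    show "M \<noteq> {}" using aM by auto
  next
    show "bot \<notin> M" using bM upM by (metis bot_least)
  next
    fix x y assume "sup x y \<in> M"
    show "x \<in> M \<or> y \<in> M"
    proof (rule ccontr)
      assume "\<not> (x \<in> M \<or> y \<in> M)"
      then obtain m n where mn: "m \<in> M" "n \<in> M" "inf m x \<le> b" "inf n y \<le> b"
        using gen by blast
      have "inf (inf m n) (sup x y) = sup (inf (inf m n) x) (inf (inf m n) y)"
        by (rule inf_sup_distrib1)
      also have "\<dots> \<le> b" using mn(3,4)
        by (meson inf_le1 inf_le2 le_inf_iff order_trans sup_least inf_mono order_refl)
      finally have "b \<in> M" using upM infM mn(1,2) \<open>sup x y \<in> M\<close> by blast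
      thus False using bM by simp
    qed
  qed (use upM infM in auto)
  thus ?thesis using aM bM by blast
qed

theorem lemma2p8:
  fixes e f i j :: "'a::{distrib_lattice, order_bot}"
  assumes "f < e" and "j < i"
  shows "V2 e f \<subseteq> V2 i j \<longleftrightarrow> (e = sup f (inf e i) \<and> inf f j = inf e j)"
proof
  assume H: "V2 e f \<subseteq> V2 i j"
  have 1: "e \<le> sup f (inf e i)"
  proof (rule ccontr)
    assume "\<not> e \<le> sup f (inf e i)"
    then obtain F where F: "prime_filter F" "e \<in> F" "sup f (inf e i) \<notin> F" using pft by blast
    have up: "\<And>x y. x \<in> F \<Longrightarrow> x \<le> y \<Longrightarrow> y \<in> F" and inm: "\<And>x y. x \<in> F \<Longrightarrow> y \<in> F \<Longrightarrow> inf x y \<in> F"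
      using F(1) unfolding prime_filter_def by auto
    have "f \<notin> F" using F up by (metis sup_ge1)
    hence "F \<in> V2 e f" using F unfolding V2_def V_def by auto
    hence "i \<in> F" using H unfolding V2_def V_def by auto
    hence "inf e i \<in> F" using inm F by auto
    thus False using F up by (metis sup_ge2)
  qed
  have 2: "inf e j \<le> f"
  proof (rule ccontr)
    assume "\<not> inf e j \<le> f"
    then obtain F where F: "prime_filter F" "inf e j \<in> F" "f \<notin> F" using pft by blast
    have up: "\<And>x y. x \<in> F \<Longrightarrow> x \<le> y \<Longrightarrow> y \<in> F"
      using F(1) unfolding prime_filter_def by auto
    have "e \<in> F" "j \<in> F" using F up by (metis inf_le1, metis inf_le2)
    hence "F \<in> V2 e f" using F unfolding V2_def V_def by auto
    hence "j \<notin> F" using H unfolding V2_def V_def by auto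
    thus False using \<open>j \<in> F\<close> by simp
  qed
  have "f \<le> e" using assms by simp
  show "e = sup f (inf e i) \<and> inf f j = inf e j"
  proof
    show "e = sup f (inf e i)" using 1 \<open>f \<le> e\<close> by (simp add: antisym)
    show "inf f j = inf e j" using 2 \<open>f \<le> e\<close>
      by (metis antisym inf_le2 inf_mono le_inf_iff order_refl)
  qed
next
  assume H: "e = sup f (inf e i) \<and> inf f j = inf e j"
  show "V2 e f \<subseteq> V2 i j"
  proof
    fix F assume "F \<in> V2 e f"
    hence F: "prime_filter F" "e \<in> F" "f \<notin> F" unfolding V2_def V_def by auto
    have up: "\<And>x y. x \<in> F \<Longrightarrow> x \<le> y \<Longrightarrow> y \<in> F" and inm: "\<And>x y. x \<in> F \<Longrightarrow> y \<in> F \<Longrightarrow> inf x y \<in> F"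
      and pr: "\<And>x y. sup x y \<in> F \<Longrightarrow> x \<in> F \<or> y \<in> F"
      using F(1) unfolding prime_filter_def by auto
    have "inf e i \<in> F" using pr[of f "inf e i"] H F by metis
    hence "i \<in> F" using up by (metis inf_le2)
    moreover have "j \<notin> F"
    proof
      assume "j \<in> F"
      hence "inf f j \<in> F" using H inm F by metis
      thus False using up F by (metis inf_le1)
    qed
    ultimately show "F \<in> V2 i j" using F unfolding V2_def V_def by auto
  qed
qed

end
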